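(* Let $r \geqslant 5$ be a prime and let $\mathcal{H}_r = \{ (q,d) : r =\frac{q^d-1}{q-1},\ q \text{ a prime power},\ d \geqslant 2 \text{ an integer} \}$. Then $|\mathcal{H}_r| < \log_2 r$. *)

theory Defs
  imports "HOL-Number_Theory.Number_Theory"
begin

definition H :: "nat \<Rightarrow> (nat \<times> nat) set" where
  "H r = {(q, d). primepow q \<and> d \<ge> 2 \<and> real r = (real q ^ d - 1) / (real q - 1)}"

end

theory Submission
  imports Defs
begin

lemma H_char:
  assumes "(q, d) \<in> H r"
  shows "q \<ge> 2 \<and> d \<ge> 2 \<and> r = (\<Sum>i<d. q^i)"
proof -
  from assms have pp: "primepow q" and d: "d \<ge> 2" and e: "real r = (real q ^ d - 1) / (real q - 1)"
    unfolding H_def by auto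
  have q: "q \<ge> 2" using pp primepow_gt_Suc_0 by fastforce
  have "real r = (\<Sum>i<d. real q ^ i)"
    using e q by (simp add: geometric_sum)
  hence "real r = real (\<Sum>i<d. q^i)" by simp
  hence "r = (\<Sum>i<d. q^i)" by (simp only: of_nat_eq_iff)
  with q d show ?thesis by auto
qed

lemma sum_strict:
  fixes a b :: nat
  assumes "a < b" "d \<ge> 2"
  shows "(\<Sum>i<d. a^i) < (\<Sum>i<d. b^i)"
proof (rule sum_strict_mono_ex1)
  show "finite {..<d}" by simp
  show "\<forall>x\<in>{..<d}. a ^ x \<le> b ^ x" using assms by (simp add: power_mono)
  show "\<exists>x\<in>{..<d}. a ^ x < b ^ x" using assms by (intro bexI[of _ 1]) auto
qed

lemma two_pow_le:
  assumes "(q, d) \<in> H r"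
  shows "2^d \<le> r + 1"
proof -
  from H_char[OF assms] have q: "q \<ge> 2" and r: "r = (\<Sum>i<d. q^i)" by auto
  have "(\<Sum>i<d. (2::nat)^i) \<le> (\<Sum>i<d. q^i)"
    using q by (intro sum_mono power_mono) auto
  moreover have "(\<Sum>i<d. (2::nat)^i) = 2^d - 1"
    by (induction d) auto
  moreover have "(2::nat)^d \<ge> 1" by simp
  ultimately show ?thesis using r by linarith
qed

theorem lemma3p9:
  fixes r :: nat
  assumes "prime r" and "r \<ge> 5"
  shows "real (card (H r)) < log 2 (real r)"
proof -
  define D where "D = nat \<lfloor>log 2 (real r + 1)\<rfloor>"
  have inj: "inj_on snd (H r)"
  proof (rule inj_onI)
    fix x y assume x: "x \<in> H r" and y: "y \<in> H r" and s: "snd x = snd y"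
    obtain q1 d where x': "x = (q1, d)" by (cases x)
    obtain q2 d' where y': "y = (q2, d')" by (cases y)
    have dd: "d' = d" using s x' y' by simp
    from H_char[of q1 d r] H_char[of q2 d r] x y x' y' dd
    have a: "r = (\<Sum>i<d. q1^i)" "r = (\<Sum>i<d. q2^i)" "d \<ge> 2" by auto
    have "q1 = q2"
    proof (rule ccontr)
      assume "q1 \<noteq> q2"
      hence "q1 < q2 \<or> q2 < q1" by auto
      thus False using sum_strict[of q1 q2 d] sum_strict[of q2 q1 d] a by auto
    qed
    thus "x = y" using x' y' dd by simp
  qed
  have sub: "snd ` H r \<subseteq> {2..D}"
  proof
    fix d assume "d \<in> snd ` H r"
    then obtain q where qd: "(q, d) \<in> H r" by auto
    have d2: "d \<ge> 2" using H_char[OF qd] by auto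
    have "real (2^d) \<le> real r + 1" using two_pow_le[OF qd] by linarith
    hence "2 powr real d \<le> real r + 1" by (simp add: powr_realpow)
    hence "real d \<le> log 2 (real r + 1)"
      by (simp add: le_log_iff)
    hence "d \<le> D" unfolding D_def by linarith
    with d2 show "d \<in> {2..D}" by auto
  qed
  have "card (H r) = card (snd ` H r)" using card_image[OF inj] by simp
  also have "\<dots> \<le> card {2..D}" by (rule card_mono[OF _ sub]) simp
  also have "\<dots> = D - 1" by simp
  finally have c: "card (H r) \<le> D - 1" .
  have "log 2 (real r + 1) \<ge> log 2 (2^2)" using assms by simp
  hence "log 2 (real r + 1) \<ge> 2" by (simp only: log_pow_cancel)
  hence D2: "D \<ge> 2" unfolding D_def by linarith
  have "real D \<le> log 2 (real r + 1)" unfolding D_def using \<open>log 2 (real r + 1) \<ge> 2\<close> by linarith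
  have "log 2 (real r + 1) - 1 = log 2 ((real r + 1) / 2)"
    by (simp add: log_divide)
  also have "\<dots> < log 2 (real r)" using assms by simp
  finally have "real D - 1 < log 2 (real r)" using \<open>real D \<le> log 2 (real r + 1)\<close> by linarith
  moreover have "real (card (H r)) \<le> real D - 1" using c D2 by linarith
  ultimately show ?thesis by linarith
qed

end
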